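(* For every $F\in\mathbb{N}^5\setminus\{0\}$, $$\sqrt{2}^{\,\|F-1\|}\le N(F).$$
   Context: $\mathbb{N}=\{0,1,2,\dots\}$. A GNS is a submonoid $S\subseteq\mathbb{N}^d$ with finite complement $\mathcal{H}(S)=\mathbb{N}^d\setminus S$. A Frobenius GNS with Frobenius gap $F$ is a GNS such that $F$ is the unique maximal element of $\mathcal{H}(S)$ for the natural partial order. $N(F)$ is the number of Frobenius GNS $S\subseteq\mathbb{N}^d$ (here $d=5$) with Frobenius gap $F$. $\|F-1\|=\prod_{i=1}^5F^{(i)}$. *)

theory Defs
  imports "HOL-Analysis.Analysis"
begin

definition vle :: "nat ^ 'd \<Rightarrow> nat ^ 'd \<Rightarrow> bool" where
  "vle x y \<longleftrightarrow> (\<forall>i. x $ i \<le> y $ i)"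

definition GNS :: "(nat ^ 'd) set \<Rightarrow> bool" where
  "GNS S \<longleftrightarrow> 0 \<in> S \<and> (\<forall>x\<in>S. \<forall>y\<in>S. x + y \<in> S) \<and> finite (UNIV - S)"

definition gaps :: "(nat ^ 'd) set \<Rightarrow> (nat ^ 'd) set" where
  "gaps S = UNIV - S"

definition is_maximal_gap :: "(nat ^ 'd) set \<Rightarrow> nat ^ 'd \<Rightarrow> bool" where
  "is_maximal_gap S h \<longleftrightarrow> h \<in> gaps S \<and> (\<forall>g\<in>gaps S. vle h g \<longrightarrow> g = h)"

definition Frobenius_GNS :: "(nat ^ 'd) set \<Rightarrow> nat ^ 'd \<Rightarrow> bool" where
  "Frobenius_GNS S F \<longleftrightarrow> GNS S \<and> is_maximal_gap S F \<and> (\<forall>h. is_maximal_gap S h \<longrightarrow> h = F)"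

definition NF :: "nat ^ 'd \<Rightarrow> nat" where
  "NF F = card {S. Frobenius_GNS S F}"

end

theory Submission
  imports Defs
begin

lemma vle_eq: "vle x y = (x \<le> y)"
  by (simp add: vle_def less_eq_vec_def)

lemma box_img: "{x :: nat^'n. \<forall>i. P i (x$i)} = vec_lambda ` (PiE UNIV (\<lambda>i. {v. P i v}))"
proof (rule set_eqI, rule iffI)
  fix x :: "nat^'n" assume "x \<in> {x. \<forall>i. P i (x$i)}"
  then have "vec_nth x \<in> PiE UNIV (\<lambda>i. {v. P i v})" by auto
  moreover have "x = vec_lambda (vec_nth x)" by simp
  ultimately show "x \<in> vec_lambda ` (PiE UNIV (\<lambda>i. {v. P i v}))" by blast
qed auto

lemma card_box: "card {x :: nat^'n. \<forall>i. x$i < F$i} = (\<Prod>i\<in>UNIV. F$i)"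
proof -
  have inj: "inj (vec_lambda :: ('n \<Rightarrow> nat) \<Rightarrow> nat^'n)"
    by (simp add: inj_def)
  have "card {x :: nat^'n. \<forall>i. x$i < F$i} = card (PiE UNIV (\<lambda>i. {v. v < F$i}))"
    unfolding box_img[of "\<lambda>i v. v < F$i"]
    by (rule card_image, rule inj_on_subset[OF inj], simp)
  also have "\<dots> = (\<Prod>i\<in>UNIV. F$i)"
    by (simp add: card_PiE)
  finally show ?thesis .
qed

lemma finite_below: "finite {x :: nat^'n. x \<le> F}"
proof -
  have "{x :: nat^'n. x \<le> F} = {x. \<forall>i. x$i \<le> F$i}" by (simp add: less_eq_vec_def)
  also have "\<dots> = vec_lambda ` (PiE UNIV (\<lambda>i. {v. v \<le> F$i}))" by (rule box_img)
  finally show ?thesis by (simp add: finite_PiE)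
qed

lemma gaps_below:
  fixes S :: "(nat^'n) set"
  assumes "Frobenius_GNS S F" "g \<notin> S"
  shows "g \<le> F"
proof -
  have fin: "finite (gaps S)" using assms(1) by (simp add: Frobenius_GNS_def GNS_def gaps_def)
  have "g \<in> gaps S" using assms(2) by (simp add: gaps_def)
  from finite_has_maximal2[OF fin this] obtain m where m: "m \<in> gaps S" "g \<le> m"
    "\<forall>b\<in>gaps S. m \<le> b \<longrightarrow> m = b" by blast
  have "is_maximal_gap S m" using m by (auto simp: is_maximal_gap_def vle_eq)
  then have "m = F" using assms(1) by (simp add: Frobenius_GNS_def)
  then show ?thesis using m by simp
qed

lemma finite_frob: "finite {S :: (nat^'n) set. Frobenius_GNS S F}"
proof -
  have "{S :: (nat^'n) set. Frobenius_GNS S F} \<subseteq> (\<lambda>T. T \<union> {x. \<not> x \<le> F}) ` Pow {x. x \<le> F}"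
  proof
    fix S assume "S \<in> {S :: (nat^'n) set. Frobenius_GNS S F}"
    then have fr: "Frobenius_GNS S F" by simp
    have "S = (S \<inter> {x. x \<le> F}) \<union> {x. \<not> x \<le> F}"
      using gaps_below[OF fr] by blast
    then show "S \<in> (\<lambda>T. T \<union> {x. \<not> x \<le> F}) ` Pow {x. x \<le> F}" by blast
  qed
  moreover have "finite ((\<lambda>T. T \<union> {x. \<not> x \<le> F}) ` Pow {x :: nat^'n. x \<le> F})"
    using finite_below[of F] by simp
  ultimately show ?thesis by (rule finite_subset)
qed

definition Bset :: "nat^'n \<Rightarrow> 'n \<Rightarrow> (nat^'n) set" where
  "Bset F j = {x. x \<le> F \<and> F$j < 2 * x$j \<and> x \<noteq> F}"

definition Sg :: "nat^'n \<Rightarrow> (nat^'n) set \<Rightarrow> (nat^'n) set" where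
  "Sg F A = insert 0 ({x. \<not> x \<le> F} \<union> A)"

lemma sg_frob:
  assumes "F \<noteq> 0" "A \<subseteq> Bset F j"
  shows "Frobenius_GNS (Sg F A) F"
proof -
  let ?S = "Sg F A"
  have gapsub: "UNIV - ?S \<subseteq> {x. x \<le> F}" by (auto simp: Sg_def)
  have Fgap: "F \<notin> ?S" using assms by (auto simp: Sg_def Bset_def)
  have add: "x + y \<in> ?S" if "x \<in> ?S" "y \<in> ?S" for x y
  proof -
    consider "x = 0" | "y = 0" | "x \<noteq> 0" "y \<noteq> 0" by blast
    then show ?thesis
    proof cases
      case 3
      have xs: "\<not> x \<le> F \<or> x \<in> A" and ys: "\<not> y \<le> F \<or> y \<in> A"
        using that 3 by (auto simp: Sg_def)
      have "\<not> x + y \<le> F"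
      proof
        assume le: "x + y \<le> F"
        have "x \<le> x + y" "y \<le> x + y" by (auto simp: less_eq_vec_def)
        then have "x \<le> F" "y \<le> F" using le by (meson order.trans)+
        then have "x \<in> Bset F j" "y \<in> Bset F j" using xs ys assms(2) by auto
        then have "F$j < x$j + y$j" by (simp add: Bset_def)
        moreover have "(x+y)$j \<le> F$j" using le by (simp add: less_eq_vec_def)
        ultimately show False by simp
      qed
      then show ?thesis by (simp add: Sg_def)
    qed (use that in auto)
  qed
  have gns: "GNS ?S"
    unfolding GNS_def using add finite_subset[OF gapsub finite_below] by (auto simp: Sg_def)
  have mg: "is_maximal_gap ?S F"
    unfolding is_maximal_gap_def gaps_def vle_eq
    using Fgap gapsub by (auto intro: order.antisym)
  have uniq: "h = F" if "is_maximal_gap ?S h" for h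
  proof -
    have "h \<in> gaps ?S" "h \<le> F" using that gapsub
      by (auto simp: is_maximal_gap_def gaps_def)
    moreover have "F \<in> gaps ?S" using Fgap by (simp add: gaps_def)
    ultimately show ?thesis using that by (auto simp: is_maximal_gap_def vle_eq)
  qed
  show ?thesis using gns mg uniq by (simp add: Frobenius_GNS_def)
qed

lemma NF_ge:
  fixes F :: "nat^'n"
  assumes "F \<noteq> 0" "0 < F$j"
  shows "2 ^ card (Bset F j) \<le> NF F"
proof -
  have finB: "finite (Bset F j)"
    by (rule finite_subset[OF _ finite_below[of F]]) (auto simp: Bset_def)
  have inj: "inj_on (Sg F) (Pow (Bset F j))"
  proof (rule inj_onI)
    fix A A' assume "A \<in> Pow (Bset F j)" "A' \<in> Pow (Bset F j)" "Sg F A = Sg F A'"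
    moreover have "Sg F X \<inter> Bset F j = X" if "X \<subseteq> Bset F j" for X
      using that assms(2) by (auto simp: Sg_def Bset_def)
    ultimately show "A = A'" by (metis PowD)
  qed
  have "Sg F ` Pow (Bset F j) \<subseteq> {S. Frobenius_GNS S F}"
    using sg_frob[OF assms(1)] by auto
  then have "card (Sg F ` Pow (Bset F j)) \<le> NF F"
    unfolding NF_def by (rule card_mono[OF finite_frob])
  moreover have "card (Sg F ` Pow (Bset F j)) = 2 ^ card (Bset F j)"
    using card_image[OF inj] card_Pow finB by simp
  ultimately show ?thesis by simp
qed

lemma box_le_2B:
  fixes F :: "nat^'n"
  assumes "0 < F$j" "k \<noteq> j"
  shows "(\<Prod>i\<in>UNIV. F$i) \<le> 2 * card (Bset F j)"
proof -
  let ?Box = "{x :: nat^'n. \<forall>i. x$i < F$i}"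
  define g1 where "g1 = (\<lambda>y :: nat^'n. \<chi> i. if i = j then y$j - 1 else y$i)"
  define g2 where "g2 = (\<lambda>y :: nat^'n. \<chi> i. if i = j then F$j - y$j else y$i)"
  have finB: "finite (Bset F j)"
    by (rule finite_subset[OF _ finite_below[of F]]) (auto simp: Bset_def)
  have sub: "?Box \<subseteq> g1 ` Bset F j \<union> g2 ` Bset F j"
  proof
    fix x assume x: "x \<in> ?Box"
    define y where "y = (\<chi> i. if i = j then max (x$j + 1) (F$j - x$j) else x$i)"
    have xj: "x$j < F$j" using x by simp
    have "y \<le> F" using x xj by (auto simp: y_def less_eq_vec_def less_imp_le Suc_le_eq)
    moreover have "F$j < 2 * y$j" using xj by (simp add: y_def max_def) arith
    moreover have "y$k \<noteq> F$k" using x assms(2) by (simp add: y_def less_not_refl3)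
    then have "y \<noteq> F" by blast
    ultimately have yB: "y \<in> Bset F j" by (simp add: Bset_def)
    have "g1 y = x \<or> g2 y = x"
    proof (cases "x$j + 1 \<ge> F$j - x$j")
      case True
      then have "g1 y = x" by (simp add: g1_def y_def vec_eq_iff max_def)
      then show ?thesis by simp
    next
      case False
      then have "g2 y = x" using xj by (simp add: g2_def y_def vec_eq_iff max_def)
      then show ?thesis by simp
    qed
    then show "x \<in> g1 ` Bset F j \<union> g2 ` Bset F j" using yB by (metis UnI1 UnI2 image_eqI)
  qed
  have "(\<Prod>i\<in>UNIV. F$i) = card ?Box" by (rule card_box[symmetric])
  also have "\<dots> \<le> card (g1 ` Bset F j \<union> g2 ` Bset F j)"
    by (rule card_mono[OF _ sub]) (simp add: finB)
  also have "\<dots> \<le> card (g1 ` Bset F j) + card (g2 ` Bset F j)" by (rule card_Un_le)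
  also have "\<dots> \<le> 2 * card (Bset F j)"
    using card_image_le[OF finB, of g1] card_image_le[OF finB, of g2] by simp
  finally show ?thesis .
qed

theorem proposition5p3:
  fixes F :: "nat ^ 5"
  assumes "F \<noteq> 0"
  shows "sqrt 2 ^ (\<Prod>i\<in>UNIV. F $ i) \<le> real (NF F)"
proof -
  obtain j where j: "0 < F$j" using assms by (metis neq0_conv vec_eq_iff zero_index)
  obtain k :: 5 where k: "k \<noteq> j"
    by (metis add_cancel_right_right zero_neq_one)
  have P: "(\<Prod>i\<in>UNIV. F$i) \<le> 2 * card (Bset F j)" by (rule box_le_2B[OF j k])
  have "sqrt 2 ^ (\<Prod>i\<in>UNIV. F $ i) \<le> sqrt 2 ^ (2 * card (Bset F j))"
    by (rule power_increasing[OF P]) simp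
  also have "\<dots> = 2 ^ card (Bset F j)" by (simp add: power_mult)
  also have "\<dots> \<le> real (NF F)" using NF_ge[OF assms j] by (metis of_nat_le_iff of_nat_numeral of_nat_power)
  finally show ?thesis .
qed

end
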